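(* Let $P_d$ denote the probability that a $d\times d$ matrix with independent, uniformly distributed entries in $\{0,1\}$ is singular. Then $P_d>\frac{d^2}{2^d}$ for all sufficiently large $d$. *)

theory Defs
  imports Complex_Main "Jordan_Normal_Form.Determinant"
begin

definition zero_one_mats :: "nat \<Rightarrow> real mat set" where
  "zero_one_mats d = {A \<in> carrier_mat d d. \<forall>i<d. \<forall>j<d. A $$ (i, j) \<in> {0, 1}}"

text \<open>P_d: probability that a uniformly random d x d 0/1 matrix (i.e. i.i.d. uniform
  entries) is singular; with the uniform measure on the 2^(d^2) matrices this is the
  proportion of singular ones.\<close>
definition P_sing :: "nat \<Rightarrow> real" where
  "P_sing d = real (card {A \<in> zero_one_mats d. det A = 0}) / real (card (zero_one_mats d))"

end

theory Submission imports Defs "HOL-Library.FuncSet" "HOL-Real_Asymp.Real_Asymp"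
begin

definition U :: "nat \<Rightarrow> (nat \<times> nat \<Rightarrow> real) set" where
  "U d = {f. (\<forall>p. f p \<in> {0,1}) \<and> (\<forall>p. p \<notin> {..<d} \<times> {..<d} \<longrightarrow> f p = 0)}"

lemma U_bij: "bij_betw (\<lambda>f. restrict f ({..<d} \<times> {..<d})) (U d) (PiE ({..<d} \<times> {..<d}) (\<lambda>_. {0,1::real}))"
proof (rule bij_betw_byWitness[where f' = "\<lambda>h p. if p \<in> {..<d} \<times> {..<d} then h p else 0"])
  show "\<forall>a\<in>U d. (\<lambda>p. if p \<in> {..<d} \<times> {..<d} then restrict a ({..<d} \<times> {..<d}) p else 0) = a"
    by (auto simp: U_def fun_eq_iff)
  show "\<forall>a'\<in>PiE ({..<d} \<times> {..<d}) (\<lambda>_. {0,1::real}). restrict (\<lambda>p. if p \<in> {..<d} \<times> {..<d} then a' p else 0) ({..<d} \<times> {..<d}) = a'"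
    by (auto simp: fun_eq_iff PiE_def extensional_def)
  show "(\<lambda>f. restrict f ({..<d} \<times> {..<d})) ` U d \<subseteq> PiE ({..<d} \<times> {..<d}) (\<lambda>_. {0,1::real})"
    by (rule image_subsetI) (auto simp add: restrict_PiE_iff U_def Pi_iff)
  show "(\<lambda>h p. if p \<in> {..<d} \<times> {..<d} then h p else 0) ` PiE ({..<d} \<times> {..<d}) (\<lambda>_. {0,1::real}) \<subseteq> U d"
    by (rule image_subsetI) (auto simp: U_def PiE_iff)
qed

lemma card_PiE01: "finite A \<Longrightarrow> card (PiE A (\<lambda>_. {0,1::real})) = 2 ^ card A"
  by (simp add: card_PiE numeral_2_eq_2)

lemma card_U: "card (U d) = 2 ^ (d*d)"
  using bij_betw_same_card[OF U_bij] card_PiE01[of "{..<d} \<times> {..<d}"] by (simp add: card_cartesian_product)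

lemma finite_U: "finite (U d)"
  using bij_betw_finite[OF U_bij] by (simp add: finite_PiE)

lemma upper:
  assumes E: "E \<subseteq> U d" and T: "T \<subseteq> {..<d} \<times> {..<d}"
    and part: "\<forall>p\<in>T. \<exists>q. q \<notin> T \<and> (\<forall>f\<in>E. f p = f q)"
  shows "card E * 2 ^ card T \<le> 2 ^ (d*d)"
proof -
  let ?D = "{..<d} \<times> {..<d}"
  have inj: "inj_on (\<lambda>f. restrict f (?D - T)) E"
  proof (rule inj_onI)
    fix f g assume f: "f \<in> E" and g: "g \<in> E" and eq: "restrict f (?D - T) = restrict g (?D - T)"
    have agree: "f q = g q" if "q \<notin> T" for q
    proof (cases "q \<in> ?D")
      case True thus ?thesis using eq that by (metis Diff_iff restrict_apply')
    next
      case False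
      from f g E have "f \<in> U d" "g \<in> U d" by auto
      with False show ?thesis unfolding U_def by (cases q) auto
    qed
    show "f = g"
    proof
      fix p show "f p = g p"
      proof (cases "p \<in> T")
        case True
        then obtain q where "q \<notin> T" "\<forall>f\<in>E. f p = f q" using part by blast
        thus ?thesis using agree f g by metis
      qed (use agree in auto)
    qed
  qed
  have sub: "(\<lambda>f. restrict f (?D - T)) ` E \<subseteq> PiE (?D - T) (\<lambda>_. {0,1::real})"
    using E by (intro image_subsetI) (auto simp add: restrict_PiE_iff U_def)
  have "card E \<le> card (PiE (?D - T) (\<lambda>_. {0,1::real}))"
    using card_inj_on_le[OF inj sub] by (simp add: finite_PiE)
  also have "\<dots> = 2 ^ (d*d - card T)"
    using card_PiE01[of "?D - T"] T by (simp add: card_Diff_subset finite_subset card_cartesian_product)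
  finally have "card E * 2 ^ card T \<le> 2 ^ (d*d - card T) * 2 ^ card T" by simp
  also have "\<dots> = 2 ^ (d*d)"
  proof -
    have "card T \<le> d*d" using card_mono[OF _ T] by (simp add: card_cartesian_product)
    thus ?thesis by (simp add: power_add[symmetric])
  qed
  finally show ?thesis .
qed

lemma lower:
  assumes E: "E \<subseteq> U d" and T: "T \<subseteq> {..<d} \<times> {..<d}"
    and ext: "\<And>h. h \<in> PiE ({..<d} \<times> {..<d} - T) (\<lambda>_. {0,1::real}) \<Longrightarrow> ext h \<in> E \<and> (\<forall>p\<in>{..<d} \<times> {..<d} - T. ext h p = h p)"
  shows "2 ^ (d*d) \<le> card E * 2 ^ card T"
proof -
  let ?D = "{..<d} \<times> {..<d}"
  have inj: "inj_on ext (PiE (?D - T) (\<lambda>_. {0,1::real}))"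
  proof (rule inj_onI)
    fix h g assume h: "h \<in> PiE (?D - T) (\<lambda>_. {0,1::real})" and g: "g \<in> PiE (?D - T) (\<lambda>_. {0,1::real})" and eq: "ext h = ext g"
    show "h = g"
      by (rule PiE_ext[OF h g]) (metis eq ext h g)
  qed
  have sub: "ext ` PiE (?D - T) (\<lambda>_. {0,1::real}) \<subseteq> E" using ext by blast
  have fin: "finite E" using finite_U E finite_subset by blast
  have "2 ^ (d*d - card T) \<le> card E"
    using card_inj_on_le[OF inj sub fin] card_PiE01[of "?D - T"] T
    by (simp add: card_Diff_subset finite_subset card_cartesian_product)
  hence "2 ^ (d*d - card T) * 2 ^ card T \<le> card E * 2 ^ card T" by simp
  moreover have "card T \<le> d*d" using card_mono[OF _ T] by (simp add: card_cartesian_product)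
  ultimately show ?thesis by (simp add: power_add[symmetric])
qed


definition RowE :: "nat \<Rightarrow> nat \<Rightarrow> nat \<Rightarrow> (nat \<times> nat \<Rightarrow> real) set" where
  "RowE d a b = {f \<in> U d. \<forall>c. f (a,c) = f (b,c)}"
definition ColE :: "nat \<Rightarrow> nat \<Rightarrow> nat \<Rightarrow> (nat \<times> nat \<Rightarrow> real) set" where
  "ColE d a b = {f \<in> U d. \<forall>r. f (r,a) = f (r,b)}"
definition Ev :: "nat \<Rightarrow> bool \<times> nat \<times> nat \<Rightarrow> (nat \<times> nat \<Rightarrow> real) set" where
  "Ev d k = (case k of (t,a,b) \<Rightarrow> if t then RowE d a b else ColE d a b)"
definition PP :: "nat \<Rightarrow> (nat \<times> nat) set" where
  "PP d = {(a,b). a < b \<and> b \<le> d}"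
definition KK :: "nat \<Rightarrow> (bool \<times> nat \<times> nat) set" where
  "KK d = UNIV \<times> PP d"
definition sw :: "(nat \<times> nat \<Rightarrow> real) \<Rightarrow> (nat \<times> nat \<Rightarrow> real)" where
  "sw f = (\<lambda>(i,j). f (j,i))"

lemma sw_sw[simp]: "sw (sw f) = f"
  by (simp add: sw_def fun_eq_iff)

lemma sw_U: "f \<in> U d \<Longrightarrow> sw f \<in> U d"
  unfolding U_def sw_def by auto

lemma sw_Row: "sw ` RowE d a b = ColE d a b"
proof -
  have 1: "sw f \<in> ColE d a b" if "f \<in> RowE d a b" for f
    using that sw_U by (auto simp: RowE_def ColE_def sw_def)
  have 2: "sw f \<in> RowE d a b" if "f \<in> ColE d a b" for f
    using that sw_U by (auto simp: RowE_def ColE_def sw_def)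
  show ?thesis using 1 2 by (auto simp: image_iff) (metis sw_sw)
qed

lemma inj_sw: "inj sw"
  by (metis injI sw_sw)

lemma card_PP: "2 * card (PP d) = d * (d+1)"
proof (induction d)
  case 0
  have "PP 0 = {}" by (auto simp: PP_def)
  thus ?case by simp
next
  case (Suc d)
  have e: "PP (Suc d) = PP d \<union> (\<lambda>a. (a, Suc d)) ` {..d}"
    by (auto simp: PP_def)
  have fin: "finite (PP d)" by (rule finite_subset[of _ "{..d} \<times> {..d}"]) (auto simp: PP_def)
  have dis: "PP d \<inter> (\<lambda>a. (a, Suc d)) ` {..d} = {}" by (auto simp: PP_def)
  have "card (PP (Suc d)) = card (PP d) + card ((\<lambda>a. (a, Suc d)) ` {..d})"
    unfolding e by (rule card_Un_disjoint[OF fin _ dis]) simp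
  also have "card ((\<lambda>a. (a, Suc d)) ` {..d}) = Suc d"
    by (subst card_image) (auto simp: inj_on_def)
  finally show ?case using Suc by simp
qed

lemma finite_PP: "finite (PP d)"
  by (rule finite_subset[of _ "{..d} \<times> {..d}"]) (auto simp: PP_def)

lemma card_KK: "card (KK d) = d * (d+1)"
  using card_PP[of d] finite_PP[of d] by (simp add: KK_def card_cartesian_product)

lemma finite_KK: "finite (KK d)"
  using finite_PP by (simp add: KK_def)

lemma Ev_sub: "Ev d k \<subseteq> U d"
  by (auto simp: Ev_def RowE_def ColE_def split: prod.splits)

lemma card_Row_lower:
  assumes ab: "a < b" "b \<le> d"
  shows "2 ^ (d*d) \<le> card (RowE d a b) * 2 ^ d"
proof -
  define dl where "dl = (if b < d then b else a)"
  define sg where "sg = (if b < d then a else d)"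
  have dl: "dl < d" "sg \<noteq> dl" using ab by (auto simp: dl_def sg_def)
  let ?D = "{..<d} \<times> {..<d}"
  let ?T = "{dl} \<times> {..<d}"
  define ext where "ext h = (\<lambda>p. if p \<in> ?D - ?T then h p else if p \<in> ?T \<and> sg < d then h (sg, snd p) else (0::real))" for h :: "nat \<times> nat \<Rightarrow> real"
  have "2 ^ (d*d) \<le> card (RowE d a b) * 2 ^ card ?T"
  proof (rule lower[where ext = ext])
    show "RowE d a b \<subseteq> U d" by (auto simp: RowE_def)
    show "?T \<subseteq> ?D" using dl by auto
    fix h assume h: "h \<in> PiE (?D - ?T) (\<lambda>_. {0,1::real})"
    have hv: "h p \<in> {0,1}" if "p \<in> ?D - ?T" for p using h that by (auto simp: PiE_iff)
    have "ext h \<in> U d"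
      unfolding U_def
    proof (intro CollectI conjI allI impI)
      fix p :: "nat \<times> nat"
      show "ext h p \<in> {0,1}"
      proof (cases p)
        case (Pair i j)
        show ?thesis using hv[of p] hv[of "(sg, j)"] dl Pair by (auto simp: ext_def)
      qed
    next
      fix p :: "nat \<times> nat" assume "p \<notin> ?D" thus "ext h p = 0" using dl by (auto simp: ext_def)
    qed
    moreover have "ext h (a,c) = ext h (b,c)" for c
      using dl ab by (auto simp: ext_def dl_def sg_def)
    ultimately show "ext h \<in> RowE d a b \<and> (\<forall>p\<in>?D - ?T. ext h p = h p)"
      by (auto simp: RowE_def ext_def)
  qed
  thus ?thesis by (simp add: card_cartesian_product)
qed

lemma card_Ev_lower:
  assumes "k \<in> KK d" shows "2 ^ (d*d) \<le> card (Ev d k) * 2 ^ d"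
proof -
  obtain t a b where k: "k = (t,a,b)" by (cases k) auto
  have ab: "a < b" "b \<le> d" using assms k by (auto simp: KK_def PP_def)
  show ?thesis
  proof (cases t)
    case True thus ?thesis using card_Row_lower[OF ab] k by (simp add: Ev_def)
  next
    case False
    have "card (ColE d a b) = card (RowE d a b)"
      using card_image[OF inj_on_subset[OF inj_sw, of "RowE d a b"]] sw_Row by simp
    thus ?thesis using card_Row_lower[OF ab] k False by (simp add: Ev_def)
  qed
qed


lemma idx:
  assumes ab: "a < b" "b \<le> d" and ab': "a' < b'" "b' \<le> d" and ne: "(a,b) \<noteq> (a',b')"
  shows "\<exists>t1 t2 s1 s2. t1 \<noteq> t2 \<and> t1 < d \<and> t2 < d \<and> s1 \<noteq> t1 \<and> s1 \<noteq> t2 \<and> s2 \<noteq> t1 \<and> s2 \<noteq> t2 \<and>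
     (\<forall>x::nat \<Rightarrow> real. x a = x b \<longrightarrow> x a' = x b' \<longrightarrow> x t1 = x s1 \<and> x t2 = x s2)"
proof -
  define dl where "dl = (if b < d then b else a)"
  define sg where "sg = (if b < d then a else d)"
  define dl' where "dl' = (if b' < d then b' else a')"
  define sg' where "sg' = (if b' < d then a' else d)"
  have P: "dl < d" "sg \<noteq> dl" "sg \<le> d" "dl' < d" "sg' \<noteq> dl'" "sg' \<le> d"
    using ab ab' by (auto simp: dl_def sg_def dl'_def sg'_def)
  have Q: "\<not> (dl = dl' \<and> sg = sg')" "\<not> (dl = sg' \<and> sg = dl')"
    using ab ab' ne by (auto simp: dl_def sg_def dl'_def sg'_def split: if_splits)
  have R: "\<And>x::nat\<Rightarrow>real. (x a = x b) = (x dl = x sg)" "\<And>x::nat\<Rightarrow>real. (x a' = x b') = (x dl' = x sg')"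
    using ab ab' by (auto simp: dl_def sg_def dl'_def sg'_def)
  show ?thesis
  proof (cases "dl = dl'")
    case False
    show ?thesis
      apply (rule exI[of _ dl], rule exI[of _ dl'], rule exI[of _ "if sg = dl' then sg' else sg"],
             rule exI[of _ "if sg' = dl then sg else sg'"])
      using P Q False by (auto simp: R)
  next
    case True
    hence "sg \<noteq> sg'" using Q by auto
    hence "sg < d \<or> sg' < d" using P by auto
    thus ?thesis
    proof
      assume "sg < d"
      show ?thesis
        apply (rule exI[of _ dl], rule exI[of _ sg], rule exI[of _ sg'], rule exI[of _ sg'])
        using P Q True \<open>sg < d\<close> by (auto simp: R)
    next
      assume "sg' < d"
      show ?thesis
        apply (rule exI[of _ dl], rule exI[of _ sg'], rule exI[of _ sg], rule exI[of _ sg])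
        using P Q True \<open>sg' < d\<close> by (auto simp: R)
    qed
  qed
qed

lemma row_row:
  assumes ab: "a < b" "b \<le> d" and ab': "a' < b'" "b' \<le> d" and ne: "(a,b) \<noteq> (a',b')"
  shows "card (RowE d a b \<inter> RowE d a' b') * 2 ^ (2*d) \<le> 2 ^ (d*d)"
proof -
  obtain t1 t2 s1 s2 where t: "t1 \<noteq> t2" "t1 < d" "t2 < d" "s1 \<noteq> t1" "s1 \<noteq> t2" "s2 \<noteq> t1" "s2 \<noteq> t2"
    and x: "\<And>x::nat \<Rightarrow> real. x a = x b \<Longrightarrow> x a' = x b' \<Longrightarrow> x t1 = x s1 \<and> x t2 = x s2"
    using idx[OF ab ab' ne] by blast
  let ?T = "{t1,t2} \<times> {..<d}"
  have "card (RowE d a b \<inter> RowE d a' b') * 2 ^ card ?T \<le> 2 ^ (d*d)"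
  proof (rule upper)
    show "RowE d a b \<inter> RowE d a' b' \<subseteq> U d" by (auto simp: RowE_def)
    show "?T \<subseteq> {..<d} \<times> {..<d}" using t by auto
    show "\<forall>p\<in>?T. \<exists>q. q \<notin> ?T \<and> (\<forall>f\<in>RowE d a b \<inter> RowE d a' b'. f p = f q)"
    proof
      fix p assume p: "p \<in> ?T"
      then obtain i c where pc: "p = (i,c)" "i = t1 \<or> i = t2" by auto
      have key: "f (t1,c) = f (s1,c) \<and> f (t2,c) = f (s2,c)" if "f \<in> RowE d a b \<inter> RowE d a' b'" for f
        using x[of "\<lambda>r. f (r,c)"] that by (auto simp: RowE_def)
      show "\<exists>q. q \<notin> ?T \<and> (\<forall>f\<in>RowE d a b \<inter> RowE d a' b'. f p = f q)"
      proof (cases "i = t1")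
        case True thus ?thesis using key t pc by (intro exI[of _ "(s1,c)"]) auto
      next
        case False thus ?thesis using key t pc by (intro exI[of _ "(s2,c)"]) auto
      qed
    qed
  qed
  moreover have "card ?T = 2*d" using t by (simp add: card_cartesian_product)
  ultimately show ?thesis by simp
qed

lemma card_minus2: "d - 2 \<le> card ({..<d::nat} - {x,y})"
proof -
  have "card {..<d} - card {x,y} \<le> card ({..<d::nat} - {x,y})" by (rule diff_card_le_card_Diff) auto
  moreover have "card {x,y} \<le> 2" by (simp add: card_insert_if)
  ultimately show ?thesis by simp
qed

lemma row_col:
  assumes ab: "a < b" "b \<le> d" and kl: "k < l" "l \<le> d"
  shows "card (RowE d a b \<inter> ColE d k l) * 2 ^ (2*d) \<le> 16 * 2 ^ (d*d)"
proof -
  define dl where "dl = (if b < d then b else a)"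
  define sg where "sg = (if b < d then a else d)"
  define e where "e = (if l < d then l else k)"
  define tu where "tu = (if l < d then k else d)"
  have P: "dl < d" "sg \<noteq> dl" "e < d" "tu \<noteq> e"
    using ab kl by (auto simp: dl_def sg_def e_def tu_def)
  let ?E = "RowE d a b \<inter> ColE d k l"
  have rowc: "f (dl,c) = f (sg,c)" if "f \<in> ?E" for f c
    using that ab by (auto simp: RowE_def dl_def sg_def)
  have colc: "f (r,e) = f (r,tu)" if "f \<in> ?E" for f r
    using that kl by (auto simp: ColE_def e_def tu_def)
  let ?A = "{dl} \<times> ({..<d} - {e,tu})"
  let ?B = "({..<d} - {dl,sg}) \<times> {e}"
  let ?T = "?A \<union> ?B"
  have "card ?E * 2 ^ card ?T \<le> 2 ^ (d*d)"
  proof (rule upper)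
    show "?E \<subseteq> U d" by (auto simp: RowE_def)
    show "?T \<subseteq> {..<d} \<times> {..<d}" using P by auto
    show "\<forall>p\<in>?T. \<exists>q. q \<notin> ?T \<and> (\<forall>f\<in>?E. f p = f q)"
    proof
      fix p assume p: "p \<in> ?T"
      show "\<exists>q. q \<notin> ?T \<and> (\<forall>f\<in>?E. f p = f q)"
      proof (cases "p \<in> ?A")
        case True
        then obtain c where c: "p = (dl,c)" "c \<noteq> e" "c \<noteq> tu" by auto
        show ?thesis using c P rowc by (intro exI[of _ "(sg,c)"]) auto
      next
        case False
        then obtain r where r: "p = (r,e)" "r \<noteq> dl" "r \<noteq> sg" using p by auto
        show ?thesis using r P colc by (intro exI[of _ "(r,tu)"]) auto
      qed
    qed
  qed
  moreover have "2*d \<le> card ?T + 4"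
  proof -
    have dis: "?A \<inter> ?B = {}" by auto
    have "card ?T = card ?A + card ?B" by (rule card_Un_disjoint) (auto simp: dis)
    also have "card ?A = card ({..<d} - {e,tu})" by (simp add: card_cartesian_product)
    also have "card ?B = card ({..<d} - {dl,sg})" by (simp add: card_cartesian_product)
    finally show ?thesis using card_minus2[of d e tu] card_minus2[of d dl sg] by linarith
  qed
  hence "(2::nat) ^ (2*d) \<le> 2 ^ (card ?T + 4)" by (rule power_increasing) simp
  hence "(2::nat) ^ (2*d) \<le> 16 * 2 ^ card ?T" by (simp add: power_add)
  hence "card ?E * 2 ^ (2*d) \<le> card ?E * (16 * 2 ^ card ?T)" by simp
  ultimately show ?thesis by linarith
qed


lemma pair_bound:
  assumes k: "k \<in> KK d" and l: "l \<in> KK d" and ne: "k \<noteq> l"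
  shows "card (Ev d k \<inter> Ev d l) * 2 ^ (2*d) \<le> 16 * 2 ^ (d*d)"
proof -
  obtain t a b where kk: "k = (t,a,b)" by (cases k) auto
  obtain t' a' b' where ll: "l = (t',a',b')" by (cases l) auto
  have ab: "a < b" "b \<le> d" "a' < b'" "b' \<le> d" using k l kk ll by (auto simp: KK_def PP_def)
  have cc: "card (ColE d a b \<inter> ColE d a' b') = card (RowE d a b \<inter> RowE d a' b')"
  proof -
    have "ColE d a b \<inter> ColE d a' b' = sw ` (RowE d a b \<inter> RowE d a' b')"
      using image_Int[OF inj_sw] sw_Row by metis
    thus ?thesis using card_image[OF inj_on_subset[OF inj_sw]] by simp
  qed
  show ?thesis
  proof (cases t)
    case True note tt = True
    show ?thesis
    proof (cases t')
      case True
      hence "(a,b) \<noteq> (a',b')" using ne kk ll tt by auto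
      thus ?thesis using row_row[OF ab(1,2) ab(3,4)] kk ll True tt by (simp add: Ev_def)
    next
      case False
      thus ?thesis using row_col[OF ab(1,2) ab(3,4)] kk ll tt by (simp add: Ev_def)
    qed
  next
    case False note tt = False
    show ?thesis
    proof (cases t')
      case True
      thus ?thesis using row_col[OF ab(3,4) ab(1,2)] kk ll tt by (simp add: Ev_def Int_commute)
    next
      case False
      hence "(a,b) \<noteq> (a',b')" using ne kk ll tt by auto
      thus ?thesis using row_row[OF ab(1,2) ab(3,4)] kk ll False tt cc by (simp add: Ev_def)
    qed
  qed
qed

lemma det_zero_row:
  assumes A: "(A :: real mat) \<in> carrier_mat n n" and k: "k < n" and z: "\<forall>j<n. A $$ (k,j) = 0"
  shows "det A = 0"
proof -
  have "(\<Prod>i = 0..<n. A $$ (i, p i)) = 0" if p: "p permutes {0..<n}" for p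
  proof (rule prod_zero)
    have "p k \<in> {0..<n}" using permutes_in_image[OF p] k by simp
    thus "\<exists>i\<in>{0..<n}. A $$ (i, p i) = 0" using k z by (intro bexI[of _ k]) auto
  qed simp
  thus ?thesis unfolding det_def'[OF A] by (intro sum.neutral) auto
qed

lemma sing_row:
  assumes ab: "a < b" "b \<le> d" and f: "f \<in> RowE d a b"
  shows "det (mat d d f) = 0"
proof (cases "b < d")
  case True
  have "row (mat d d f) a = row (mat d d f) b" using f ab True by (auto simp: RowE_def)
  thus ?thesis using det_identical_rows[of "mat d d f" d a b] ab True by auto
next
  case False
  hence "b = d" using ab by simp
  have "\<forall>j<d. mat d d f $$ (a,j) = 0"
  proof (intro allI impI)
    fix j assume j: "j < d"
    have "f (a,j) = f (d,j)" using f \<open>b = d\<close> by (auto simp: RowE_def)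
    also have "\<dots> = 0" using f by (auto simp: RowE_def U_def)
    finally show "mat d d f $$ (a,j) = 0" using j ab by simp
  qed
  thus ?thesis using det_zero_row[of "mat d d f" d a] ab \<open>b = d\<close> by auto
qed

lemma transpose_sw: "transpose_mat (mat d d (sw f)) = mat d d f"
  by (rule eq_matI) (auto simp: sw_def)

lemma sing_Ev:
  assumes k: "k \<in> KK d" and f: "f \<in> Ev d k"
  shows "det (mat d d f) = 0"
proof -
  obtain t a b where kk: "k = (t,a,b)" by (cases k) auto
  have ab: "a < b" "b \<le> d" using k kk by (auto simp: KK_def PP_def)
  show ?thesis
  proof (cases t)
    case True thus ?thesis using sing_row[OF ab] f kk by (simp add: Ev_def)
  next
    case False
    hence "f \<in> ColE d a b" using f kk by (simp add: Ev_def)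
    then obtain g where g: "g \<in> RowE d a b" "f = sw g" using sw_Row by blast
    have "det (mat d d f) = det (transpose_mat (mat d d (sw f)))" by (simp add: transpose_sw)
    also have "\<dots> = det (mat d d (sw f))" using det_transpose[of "mat d d (sw f)" d] by simp
    also have "\<dots> = 0" using sing_row[OF ab] g by simp
    finally show ?thesis .
  qed
qed

lemma bonf:
  assumes "finite K" "\<forall>k\<in>K. finite (E k)"
  shows "real (\<Sum>k\<in>K. card (E k)) - (\<Sum>k\<in>K. \<Sum>l\<in>K - {k}. real (card (E k \<inter> E l))) \<le> real (card (\<Union>k\<in>K. E k))"
  using assms
proof (induction K rule: finite_induct)
  case empty thus ?case by simp
next
  case (insert k K)
  let ?V = "\<Union>l\<in>K. E l"
  let ?c = "\<lambda>j l. real (card (E j \<inter> E l))"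
  have finV: "finite ?V" using insert by auto
  have fk: "finite (E k)" using insert by auto
  have un: "card (E k \<union> ?V) + card (E k \<inter> ?V) = card (E k) + card ?V"
    using card_Un_Int[OF fk finV] by simp
  have "card (E k \<inter> ?V) = card (\<Union>l\<in>K. E k \<inter> E l)" by (rule arg_cong[where f=card]) blast
  also have "\<dots> \<le> (\<Sum>l\<in>K. card (E k \<inter> E l))" by (rule card_UN_le) (use insert in auto)
  finally have "real (card (E k \<inter> ?V)) \<le> real (\<Sum>l\<in>K. card (E k \<inter> E l))"
    by (rule of_nat_mono)
  hence ci: "real (card (E k \<inter> ?V)) \<le> (\<Sum>l\<in>K. ?c k l)" by simp
  have s1: "(\<Sum>l\<in>insert k K - {k}. ?c k l) = (\<Sum>l\<in>K. ?c k l)"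
    using insert by (simp add: insert_Diff_if)
  have s2: "(\<Sum>j\<in>K. \<Sum>l\<in>insert k K - {j}. ?c j l) \<ge> (\<Sum>j\<in>K. \<Sum>l\<in>K - {j}. ?c j l)"
  proof (rule sum_mono)
    fix j assume j: "j \<in> K"
    have "insert k K - {j} = insert k (K - {j})" using j insert by auto
    thus "(\<Sum>l\<in>K - {j}. ?c j l) \<le> (\<Sum>l\<in>insert k K - {j}. ?c j l)"
      using insert by simp
  qed
  have IH: "real (\<Sum>k\<in>K. card (E k)) - (\<Sum>k\<in>K. \<Sum>l\<in>K - {k}. ?c k l) \<le> real (card ?V)"
    using insert by auto
  have "real (\<Sum>j\<in>insert k K. card (E j)) - (\<Sum>j\<in>insert k K. \<Sum>l\<in>insert k K - {j}. ?c j l)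
      = real (card (E k)) + real (\<Sum>j\<in>K. card (E j)) - ((\<Sum>l\<in>K. ?c k l) + (\<Sum>j\<in>K. \<Sum>l\<in>insert k K - {j}. ?c j l))"
    using insert s1 by simp
  also have "\<dots> \<le> real (card (E k)) + real (card ?V) - real (card (E k \<inter> ?V))"
    using IH s2 ci by linarith
  also have "\<dots> = real (card (E k \<union> ?V))"
  proof -
    have "real (card (E k \<union> ?V)) + real (card (E k \<inter> ?V)) = real (card (E k)) + real (card ?V)"
      using un by (metis of_nat_add)
    thus ?thesis by linarith
  qed
  finally show ?case by simp
qed

lemma zo_image: "zero_one_mats d = (\<lambda>f. mat d d f) ` U d"
proof
  show "(\<lambda>f. mat d d f) ` U d \<subseteq> zero_one_mats d"
  proof (rule image_subsetI)
    fix f assume "f \<in> U d"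
    hence "\<forall>i<d. \<forall>j<d. f (i,j) \<in> {0,1}" by (simp add: U_def)
    thus "mat d d f \<in> zero_one_mats d" by (simp add: zero_one_mats_def)
  qed
  show "zero_one_mats d \<subseteq> (\<lambda>f. mat d d f) ` U d"
  proof
    fix A assume A: "A \<in> zero_one_mats d"
    define f where "f = (\<lambda>(i,j). if i < d \<and> j < d then A $$ (i,j) else 0)"
    have "f \<in> U d" using A by (auto simp: U_def f_def zero_one_mats_def)
    moreover have "A = mat d d f" using A by (auto simp: f_def zero_one_mats_def)
    ultimately show "A \<in> (\<lambda>f. mat d d f) ` U d" by blast
  qed
qed

lemma inj_mat: "inj_on (\<lambda>f. mat d d f) (U d)"
proof (rule inj_onI)
  fix f g assume f: "f \<in> U d" and g: "g \<in> U d" and eq: "mat d d f = mat d d g"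
  show "f = g"
  proof
    fix p :: "nat \<times> nat"
    obtain i j where p: "p = (i,j)" by (cases p) auto
    show "f p = g p"
    proof (cases "i < d \<and> j < d")
      case True
      hence "mat d d f $$ (i,j) = mat d d g $$ (i,j)" using eq by simp
      thus ?thesis using True p by simp
    next
      case False thus ?thesis using f g p by (auto simp: U_def)
    qed
  qed
qed


lemma ev_big: "\<forall>\<^sub>F d in sequentially. 16 * real d * (real d + 1)^2 < 2 ^ d"
  by real_asymp

lemma main_ineq:
  fixes d :: nat
  assumes d: "d \<ge> 1" and big: "16 * real d * (real d + 1)^2 < 2 ^ d"
  shows "real d ^ 2 / 2 ^ d < P_sing d"
proof -
  define X :: real where "X = 2 ^ (d*d)"
  define Y :: real where "Y = 2 ^ d"
  define N :: real where "N = real d * (real d + 1)"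
  have Xp: "X > 0" and Yp: "Y > 0" by (auto simp: X_def Y_def)
  let ?S = "{A \<in> zero_one_mats d. det A = 0}"
  let ?V = "\<Union>k\<in>KK d. Ev d k"
  have cz: "card (zero_one_mats d) = 2 ^ (d*d)"
    using zo_image card_image[OF inj_mat] card_U by metis
  have finS: "finite ?S" using zo_image finite_U by simp
  have VU: "?V \<subseteq> U d" using Ev_sub by blast
  have imgS: "(\<lambda>f. mat d d f) ` ?V \<subseteq> ?S"
  proof
    fix A assume "A \<in> (\<lambda>f. mat d d f) ` ?V"
    then obtain k f where k: "k \<in> KK d" and f: "f \<in> Ev d k" and A: "A = mat d d f" by blast
    have "A \<in> zero_one_mats d" using zo_image f Ev_sub A by blast
    moreover have "det A = 0" using sing_Ev[OF k f] A by simp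
    ultimately show "A \<in> ?S" by simp
  qed
  have cV: "card ?V \<le> card ?S"
    using card_mono[OF finS imgS] card_image[OF inj_on_subset[OF inj_mat VU]] by simp
  have finE: "\<forall>k\<in>KK d. finite (Ev d k)" using Ev_sub finite_U finite_subset by blast
  have B: "real (\<Sum>k\<in>KK d. card (Ev d k)) - (\<Sum>k\<in>KK d. \<Sum>l\<in>KK d - {k}. real (card (Ev d k \<inter> Ev d l))) \<le> real (card ?V)"
    by (rule bonf[OF finite_KK finE])
  have cK: "real (card (KK d)) = N" unfolding N_def card_KK by (simp add: algebra_simps)
  have low1: "X / Y \<le> real (card (Ev d k))" if "k \<in> KK d" for k
  proof -
    have "real (2 ^ (d*d)) \<le> real (card (Ev d k) * 2 ^ d)"
      using card_Ev_lower[OF that] by (rule of_nat_mono)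
    hence "X \<le> real (card (Ev d k)) * Y" by (simp add: X_def Y_def)
    thus ?thesis using Yp by (simp add: divide_le_eq)
  qed
  have low: "N * (X / Y) \<le> real (\<Sum>k\<in>KK d. card (Ev d k))"
    using sum_bounded_below[of "KK d" "X / Y" "\<lambda>k. real (card (Ev d k))"] low1 cK by simp
  have up1: "real (card (Ev d k \<inter> Ev d l)) \<le> 16 * X / Y^2" if "k \<in> KK d" "l \<in> KK d - {k}" for k l
  proof -
    have "real (card (Ev d k \<inter> Ev d l) * 2 ^ (2*d)) \<le> real (16 * 2 ^ (d*d))"
      using pair_bound[of k d l] that by (intro of_nat_mono) auto
    hence "real (card (Ev d k \<inter> Ev d l)) * Y^2 \<le> 16 * X"
      by (simp add: X_def Y_def power_mult[symmetric] mult.commute)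
    thus ?thesis using Yp by (simp add: le_divide_eq)
  qed
  have up2: "(\<Sum>l\<in>KK d - {k}. real (card (Ev d k \<inter> Ev d l))) \<le> N * (16 * X / Y^2)" if "k \<in> KK d" for k
  proof -
    have "(\<Sum>l\<in>KK d - {k}. real (card (Ev d k \<inter> Ev d l))) \<le> real (card (KK d - {k})) * (16 * X / Y^2)"
      by (rule sum_bounded_above) (use up1 that in auto)
    also have "\<dots> \<le> N * (16 * X / Y^2)"
    proof (rule mult_right_mono)
      have "card (KK d - {k}) \<le> card (KK d)" by (rule card_mono) (auto simp: finite_KK)
      thus "real (card (KK d - {k})) \<le> N" using cK by linarith
    qed (use Xp Yp in simp)
    finally show ?thesis .
  qed
  have up: "(\<Sum>k\<in>KK d. \<Sum>l\<in>KK d - {k}. real (card (Ev d k \<inter> Ev d l))) \<le> N * (N * (16 * X / Y^2))"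
    using sum_bounded_above[of "KK d" "\<lambda>k. \<Sum>l\<in>KK d - {k}. real (card (Ev d k \<inter> Ev d l))" "N * (16 * X / Y^2)"] up2 cK
    by simp
  have cS: "N * (X / Y) - N * (N * (16 * X / Y^2)) \<le> real (card ?S)"
    using B low up cV by linarith
  have P: "P_sing d = real (card ?S) / X" using cz by (simp add: P_sing_def X_def)
  have key: "real d ^ 2 / Y < N / Y - 16 * N^2 / Y^2"
  proof -
    have dpos: "real d > 0" using d by simp
    have "real d * (16 * real d * (real d + 1)^2) < real d * Y"
      using big dpos by (simp add: Y_def)
    hence "16 * N^2 < real d * Y" by (simp add: N_def power2_eq_square algebra_simps)
    hence "real d ^ 2 * Y < N * Y - 16 * N^2" by (simp add: N_def power2_eq_square algebra_simps)
    hence "real d ^ 2 * Y / Y^2 < (N * Y - 16 * N^2) / Y^2"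
      using Yp by (intro divide_strict_right_mono) auto
    thus ?thesis using Yp by (simp add: power2_eq_square diff_divide_distrib)
  qed
  also have "N / Y - 16 * N^2 / Y^2 = (N * (X / Y) - N * (N * (16 * X / Y^2))) / X"
    using Xp Yp by (simp add: field_simps power2_eq_square)
  also have "\<dots> \<le> real (card ?S) / X"
    using cS Xp by (intro divide_right_mono) auto
  finally show ?thesis using P by (simp add: Y_def)
qed

theorem mainTheorem8:
  shows "\<forall>\<^sub>F d in sequentially. P_sing d > real d ^ 2 / 2 ^ d"
  using ev_big eventually_ge_at_top[of "1::nat"]
proof eventually_elim
  case (elim d) thus ?case using main_ineq by blast
qed

end
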